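(* Let $V$ be a vertex algebra and $g$ an automorphism of $V$ of finite order $T$. For all $m,n,p\in(1/T)\mathbb N$, $V\bullet_{g,m,p}^{\,n}\tilde O_{g,p,m}(V)\subseteq\tilde O_{g,n,m}(V)$ and $\tilde O_{g,n,p}(V)\bullet_{g,m,p}^{\,n}V\subseteq\tilde O_{g,n,m}(V)$. In particular $V\,\bar\bullet_{g,m}^{\,n}\,\tilde O_{g,n,m}(V)\subseteq\tilde O_{g,n,m}(V)$ and $\tilde O_{g,n,m}(V)\bullet_{g,m}^{\,n}V\subseteq\tilde O_{g,n,m}(V)$.
   Context: $V$ is a vertex algebra with vacuum $\mathbf{1}$, vertex operator $Y(v,x)=\sum_{k\in\mathbb Z}v_kx^{-k-1}$ and $\mathcal{D}v=v_{-2}\mathbf 1$; $g$ is an automorphism with $g^T=1$, and $V=\bigoplus_{r=0}^{T-1}V^r$, $V^r=\{v: gv=e^{-2\pi\sqrt{-1}r/T}v\}$. For $k,l\in\{0,\dots,T-1\}$ let $\delta_k(l)=1$ if $k\ge l$, $0$ if $k<l$, and $\delta_k(T)=0$. Write $n=\lfloor n\rfloor+\bar n/T$ with $\bar n\in\{0,\dots,T-1\}$. $(1+y)^\alpha$ is expanded in nonnegative powers of $y$; $Y(u,\log(1+y))v$ is $Y(u,x)v$ with $x=\log(1+y)$. For $u\in V^r$, $v\in V$, $m,n,p\in(1/T)\mathbb N$ with $\bar p-\bar n\equiv r\pmod T$: $u\bullet_{g,m,p}^{\,n}v=\sum_{i=0}^{\lfloor p\rfloor}(-1)^i\binom{\lfloor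 m\rfloor+\lfloor n\rfloor-\lfloor p\rfloor-1+\delta_{\bar m}(r)+\delta_{\bar n}(T-r)+i}{i}\operatorname{Res}_y\frac{(1+y)^{-1+\lfloor m\rfloor+\delta_{\bar m}(r)+r/T}}{y^{\lfloor m\rfloor+\lfloor n\rfloor-\lfloor p\rfloor+\delta_{\bar m}(r)+\delta_{\bar n}(T-r)+i}}Y(u,\log(1+y))v,$ and $0$ otherwise (bilinear extension). $\bar\bullet_{g,m}^{\,n}=\bullet_{g,m,n}^{\,n}$, $\bullet_{g,m}^{\,n}=\bullet_{g,m,m}^{\,n}$. For $u\in V^r$: $u\diamond_{g,m}^{\,n}v=\operatorname{Res}_y\frac{(1+y)^{-1+\delta_{\bar m}(r)+\lfloor m\rfloor+r/T}}{y^{\lfloor m\rfloor+\lfloor n\rfloor+\delta_{\bar m}(r)+\delta_{\bar n}(T-r)+1}}Y(u,\log(1+y))v$. $\tilde O'_{g,n,m}(V)=\mathrm{span}\{u\diamond_{g,m}^{\,n}v\}+\mathrm{span}\{(\mathcal D+m-n)u\}$. $\tilde O''_{g,n,m}(V)$ is the span of all $u\bullet_{g,m,p_3}^{\,n}\big((a\bullet_{g,p_1,p_2}^{\,p_3}b)\bullet_{g,m,p_1}^{\,p_3}c-a\bullet_{g,m,p_2}^{\,p_3}(b\bullet_{g,m,p_1}^{\,p_2}c)\big)$ ($a,b,c,u\in V$, $p_i\in(1/T)\mathbb N$); $\tilde O'''_{g,n,m}(V)=\sum_{p_1,p_2\in(1/T)\mathbb N}\big(V\bullet_{g,p_1,p_2}^{\,n}\tilde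 O'_{g,p_2,p_1}(V)\big)\bullet_{g,m,p_1}^{\,n}V$; $\tilde O_{g,n,m}(V)=\tilde O'_{g,n,m}(V)+\tilde O''_{g,n,m}(V)+\tilde O'''_{g,n,m}(V)$. For subspaces $A,B$, $A\bullet B$ denotes the span of all $a\bullet b$. *)

theory Defs
  imports Complex_Main "HOL-Library.Groups_Big_Fun" "HOL-Computational_Algebra.Formal_Power_Series" "HOL-Library.Set_Algebras"
begin

text \<open>A vertex algebra is a complex vector space (carrier type 'v, scalar multiplication smul)
  with vacuum vac and modes Y u k v = u_k v, so that Y(u,x)v = sum_k u_k v x^(-k-1). All sums in the Borcherds identity are
  finite by truncation; Sum_any sums over the finite support.\<close>

definition vertex_algebra ::
  "(complex \<Rightarrow> 'v::ab_group_add \<Rightarrow> 'v) \<Rightarrow> ('v \<Rightarrow> int \<Rightarrow> 'v \<Rightarrow> 'v) \<Rightarrow> 'v \<Rightarrow> bool" where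
  "vertex_algebra smul Y vac \<longleftrightarrow>
     vector_space smul \<and>
     (\<forall>k v. Vector_Spaces.linear smul smul (\<lambda>u. Y u k v)) \<and>
     (\<forall>u k. Vector_Spaces.linear smul smul (Y u k)) \<and>
     (\<forall>u v. \<exists>K. \<forall>k\<ge>K. Y u k v = 0) \<and>
     (\<forall>k v. Y vac k v = (if k = -1 then v else 0)) \<and>
     (\<forall>u k. k \<ge> 0 \<longrightarrow> Y u k vac = 0) \<and>
     (\<forall>u. Y u (-1) vac = u) \<and>
     (\<forall>u v w p q r.
        Sum_any (\<lambda>i::nat. smul (of_int p gchoose i) (Y (Y u (r + int i) v) (p + q - int i) w))
        = Sum_any (\<lambda>i::nat. smul ((-1) ^ i * (of_int r gchoose i))
              (Y u (p + r - int i) (Y v (q + int i) w)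
               - smul ((-1::complex) powi r) (Y v (q + r - int i) (Y u (p + int i) w)))))"

definition va_automorphism ::
  "(complex \<Rightarrow> 'v::ab_group_add \<Rightarrow> 'v) \<Rightarrow> ('v \<Rightarrow> int \<Rightarrow> 'v \<Rightarrow> 'v) \<Rightarrow> 'v \<Rightarrow> ('v \<Rightarrow> 'v) \<Rightarrow> bool" where
  "va_automorphism smul Y vac g \<longleftrightarrow>
     Vector_Spaces.linear smul smul g \<and> bij g \<and> g vac = vac \<and>
     (\<forall>u k v. g (Y u k v) = Y (g u) k (g v))"

definition eigsp :: "(complex \<Rightarrow> 'v \<Rightarrow> 'v) \<Rightarrow> ('v \<Rightarrow> 'v) \<Rightarrow> nat \<Rightarrow> nat \<Rightarrow> 'v set" where
  "eigsp smul g T r = {v. g v = smul (cis (- 2 * pi * real r / real T)) v}"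

text \<open>Projection of V onto V^r along the decomposition V = direct sum of the V^r (g^T = 1).\<close>
definition proj :: "(complex \<Rightarrow> 'v::ab_group_add \<Rightarrow> 'v) \<Rightarrow> ('v \<Rightarrow> 'v) \<Rightarrow> nat \<Rightarrow> nat \<Rightarrow> 'v \<Rightarrow> 'v" where
  "proj smul g T r u = smul (1 / of_nat T) (\<Sum>j<T. smul (cis (2 * pi * real r * real j / real T)) ((g ^^ j) u))"

definition fracs :: "nat \<Rightarrow> rat set" where
  "fracs T = {of_nat k / of_nat T | k. True}"

text \<open>n = floor n + bar n / T.\<close>
definition fl :: "rat \<Rightarrow> int" where "fl m = \<lfloor>m\<rfloor>"
definition bar :: "nat \<Rightarrow> rat \<Rightarrow> nat" where
  "bar T m = nat \<lfloor>of_nat T * (m - of_int \<lfloor>m\<rfloor>)\<rfloor>"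

definition delta :: "nat \<Rightarrow> nat \<Rightarrow> nat \<Rightarrow> int" where
  "delta T k l = (if l = T then 0 else if l \<le> k then 1 else 0)"

text \<open>Lser = log(1+y)/y as a power series (constant term 1);
  Lpow j = Lser^j for an integer j.\<close>
definition Lser :: "complex fps" where
  "Lser = Abs_fps (\<lambda>j. (-1) ^ j / of_nat (j + 1))"

definition Lpow :: "int \<Rightarrow> complex fps" where
  "Lpow j = (if j \<ge> 0 then Lser ^ nat j else inverse Lser ^ nat (- j))"

text \<open>Coefficient of y^(N-1) in (1+y)^a (log(1+y))^(-k-1), where
  (log(1+y))^(-k-1) = y^(-k-1) Lser^(-k-1) as a Laurent series in y.\<close>
definition rescoef :: "complex \<Rightarrow> int \<Rightarrow> int \<Rightarrow> complex" where
  "rescoef a N k = (if N + k < 0 then 0 else fps_nth (fps_binomial a * Lpow (- k - 1)) (nat (N + k)))"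

text \<open>res smul Y a N u v = Res_y (1+y)^a / y^N  Y(u, log(1+y)) v
  (finite sum by truncation).\<close>
definition res :: "(complex \<Rightarrow> 'v::ab_group_add \<Rightarrow> 'v) \<Rightarrow> ('v \<Rightarrow> int \<Rightarrow> 'v \<Rightarrow> 'v) \<Rightarrow> complex \<Rightarrow> int \<Rightarrow> 'v \<Rightarrow> 'v \<Rightarrow> 'v" where
  "res smul Y a N u v = Sum_any (\<lambda>k::int. smul (rescoef a N k) (Y u k v))"

definition bul_hom :: "(complex \<Rightarrow> 'v::ab_group_add \<Rightarrow> 'v) \<Rightarrow> ('v \<Rightarrow> int \<Rightarrow> 'v \<Rightarrow> 'v) \<Rightarrow> nat \<Rightarrow> nat
    \<Rightarrow> rat \<Rightarrow> rat \<Rightarrow> rat \<Rightarrow> 'v \<Rightarrow> 'v \<Rightarrow> 'v" where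
  "bul_hom smul Y T r m p n u v =
    (if (int (bar T p) - int (bar T n)) mod int T = int r mod int T then
       (\<Sum>i\<in>{0..nat (fl p)}.
          smul ((-1) ^ i * (of_int (fl m + fl n - fl p - 1 + delta T (bar T m) r + delta T (bar T n) (T - r) + int i) gchoose i))
            (res smul Y (-1 + of_int (fl m) + of_int (delta T (bar T m) r) + of_nat r / of_nat T)
                 (fl m + fl n - fl p + delta T (bar T m) r + delta T (bar T n) (T - r) + int i) u v))
     else 0)"

definition bul :: "(complex \<Rightarrow> 'v::ab_group_add \<Rightarrow> 'v) \<Rightarrow> ('v \<Rightarrow> int \<Rightarrow> 'v \<Rightarrow> 'v) \<Rightarrow> ('v \<Rightarrow> 'v) \<Rightarrow> nat
    \<Rightarrow> rat \<Rightarrow> rat \<Rightarrow> rat \<Rightarrow> 'v \<Rightarrow> 'v \<Rightarrow> 'v" where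
  "bul smul Y g T m p n u v = (\<Sum>r<T. bul_hom smul Y T r m p n (proj smul g T r u) v)"

definition diam_hom :: "(complex \<Rightarrow> 'v::ab_group_add \<Rightarrow> 'v) \<Rightarrow> ('v \<Rightarrow> int \<Rightarrow> 'v \<Rightarrow> 'v) \<Rightarrow> nat \<Rightarrow> nat
    \<Rightarrow> rat \<Rightarrow> rat \<Rightarrow> 'v \<Rightarrow> 'v \<Rightarrow> 'v" where
  "diam_hom smul Y T r m n u v =
     res smul Y (-1 + of_int (delta T (bar T m) r) + of_int (fl m) + of_nat r / of_nat T)
         (fl m + fl n + delta T (bar T m) r + delta T (bar T n) (T - r) + 1) u v"

definition diam :: "(complex \<Rightarrow> 'v::ab_group_add \<Rightarrow> 'v) \<Rightarrow> ('v \<Rightarrow> int \<Rightarrow> 'v \<Rightarrow> 'v) \<Rightarrow> ('v \<Rightarrow> 'v) \<Rightarrow> nat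
    \<Rightarrow> rat \<Rightarrow> rat \<Rightarrow> 'v \<Rightarrow> 'v \<Rightarrow> 'v" where
  "diam smul Y g T m n u v = (\<Sum>r<T. diam_hom smul Y T r m n (proj smul g T r u) v)"

definition bulset :: "(complex \<Rightarrow> 'v::ab_group_add \<Rightarrow> 'v) \<Rightarrow> ('v \<Rightarrow> int \<Rightarrow> 'v \<Rightarrow> 'v) \<Rightarrow> ('v \<Rightarrow> 'v) \<Rightarrow> nat
    \<Rightarrow> rat \<Rightarrow> rat \<Rightarrow> rat \<Rightarrow> 'v set \<Rightarrow> 'v set \<Rightarrow> 'v set" where
  "bulset smul Y g T m p n A B = module.span smul {bul smul Y g T m p n a b | a b. a \<in> A \<and> b \<in> B}"

definition O1 :: "(complex \<Rightarrow> 'v::ab_group_add \<Rightarrow> 'v) \<Rightarrow> ('v \<Rightarrow> int \<Rightarrow> 'v \<Rightarrow> 'v) \<Rightarrow> 'v \<Rightarrow> ('v \<Rightarrow> 'v) \<Rightarrow> nat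
    \<Rightarrow> rat \<Rightarrow> rat \<Rightarrow> 'v set" where
  "O1 smul Y vac g T n m =
     module.span smul {diam smul Y g T m n u v | u v. True}
     + module.span smul {Y u (-2) vac + smul (of_rat (m - n)) u | u. True}"

definition O2 :: "(complex \<Rightarrow> 'v::ab_group_add \<Rightarrow> 'v) \<Rightarrow> ('v \<Rightarrow> int \<Rightarrow> 'v \<Rightarrow> 'v) \<Rightarrow> ('v \<Rightarrow> 'v) \<Rightarrow> nat
    \<Rightarrow> rat \<Rightarrow> rat \<Rightarrow> 'v set" where
  "O2 smul Y g T n m = module.span smul
     {bul smul Y g T m p3 n u
        (bul smul Y g T m p1 p3 (bul smul Y g T p1 p2 p3 a b) c
         - bul smul Y g T m p2 p3 a (bul smul Y g T m p1 p2 b c))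
      | u a b c p1 p2 p3. p1 \<in> fracs T \<and> p2 \<in> fracs T \<and> p3 \<in> fracs T}"

definition O3 :: "(complex \<Rightarrow> 'v::ab_group_add \<Rightarrow> 'v) \<Rightarrow> ('v \<Rightarrow> int \<Rightarrow> 'v \<Rightarrow> 'v) \<Rightarrow> 'v \<Rightarrow> ('v \<Rightarrow> 'v) \<Rightarrow> nat
    \<Rightarrow> rat \<Rightarrow> rat \<Rightarrow> 'v set" where
  "O3 smul Y vac g T n m = module.span smul
     (\<Union>{bulset smul Y g T m p1 n (bulset smul Y g T p1 p2 n UNIV (O1 smul Y vac g T p2 p1)) UNIV
         | p1 p2. p1 \<in> fracs T \<and> p2 \<in> fracs T})"

definition Ot :: "(complex \<Rightarrow> 'v::ab_group_add \<Rightarrow> 'v) \<Rightarrow> ('v \<Rightarrow> int \<Rightarrow> 'v \<Rightarrow> 'v) \<Rightarrow> 'v \<Rightarrow> ('v \<Rightarrow> 'v) \<Rightarrow> nat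
    \<Rightarrow> rat \<Rightarrow> rat \<Rightarrow> 'v set" where
  "Ot smul Y vac g T n m = O1 smul Y vac g T n m + O2 smul Y g T n m + O3 smul Y vac g T n m"

end

theory Submission
  imports Defs
begin

locale VActx =
  fixes smul :: "complex \<Rightarrow> 'v::ab_group_add \<Rightarrow> 'v"
    and Y :: "'v \<Rightarrow> int \<Rightarrow> 'v \<Rightarrow> 'v" and vac :: 'v
    and g :: "'v \<Rightarrow> 'v" and T :: nat
  assumes VA: "vertex_algebra smul Y vac"
    and aut: "va_automorphism smul Y vac g"
    and Tpos: "T > 0" and gT: "g ^^ T = id"
begin

lemma vs: "vector_space smul" using VA unfolding vertex_algebra_def by blast

sublocale vector_space smul by (rule vs)

lemma linY1: "Vector_Spaces.linear smul smul (\<lambda>u. Y u k v)" using VA unfolding vertex_algebra_def by blast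
lemma linY2: "Vector_Spaces.linear smul smul (Y u k)" using VA unfolding vertex_algebra_def by blast
lemma trunc: "\<exists>K. \<forall>k\<ge>K. Y u k v = 0" using VA unfolding vertex_algebra_def by blast
lemma vacY: "Y vac k v = (if k = -1 then v else 0)" using VA unfolding vertex_algebra_def by blast
lemma creat0: "k \<ge> 0 \<Longrightarrow> Y u k vac = 0" using VA unfolding vertex_algebra_def by blast
lemma creat1: "Y u (-1) vac = u" using VA unfolding vertex_algebra_def by blast
lemma borch: "Sum_any (\<lambda>i::nat. smul (of_int p gchoose i) (Y (Y u (r + int i) v) (p + q - int i) w))
        = Sum_any (\<lambda>i::nat. smul ((-1) ^ i * (of_int r gchoose i))
              (Y u (p + r - int i) (Y v (q + int i) w)
               - smul ((-1::complex) powi r) (Y v (q + r - int i) (Y u (p + int i) w))))"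
  using VA unfolding vertex_algebra_def by blast

lemma linD:
  assumes "Vector_Spaces.linear smul smul f"
  shows "f (x + y) = f x + f y" "f (smul c x) = smul c (f x)" "f 0 = 0" "f (x - y) = f x - f y"
    "f (- x) = - f x" "f (sum h A) = (\<Sum>a\<in>A. f (h a))"
proof -
  interpret lf: Vector_Spaces.linear smul smul f by (rule assms)
  show "f (x + y) = f x + f y" "f (smul c x) = smul c (f x)" "f 0 = 0" "f (x - y) = f x - f y"
    "f (- x) = - f x" "f (sum h A) = (\<Sum>a\<in>A. f (h a))"
    by (simp_all add: lf.add lf.scale lf.diff lf.neg lf.sum)
qed

lemma linI:
  assumes "\<And>x y. f (x + y) = f x + f y" "\<And>c x. f (smul c x) = smul c (f x)"
  shows "Vector_Spaces.linear smul smul f"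
  using assms vs unfolding Vector_Spaces.linear_iff by blast

lemma Y1_add: "Y (u1 + u2) k v = Y u1 k v + Y u2 k v" using linD[OF linY1] by blast
lemma Y1_scale: "Y (smul c u) k v = smul c (Y u k v)" using linD[OF linY1] by blast
lemma Y1_zero[simp]: "Y 0 k v = 0" using linD[OF linY1] by blast
lemma Y2_add: "Y u k (v1 + v2) = Y u k v1 + Y u k v2" using linD[OF linY2] by blast
lemma Y2_scale: "Y u k (smul c v) = smul c (Y u k v)" using linD[OF linY2] by blast
lemma Y2_zero[simp]: "Y u k 0 = 0" using linD[OF linY2] by blast

lemma res_sum:
  assumes "\<forall>k\<ge>K. Y u k v = 0"
  shows "res smul Y a N u v = (\<Sum>k\<in>{-N..<K}. smul (rescoef a N k) (Y u k v))"
  unfolding res_def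
proof (rule Sum_any.expand_superset)
  show "finite {-N..<K}" by simp
  show "{k. smul (rescoef a N k) (Y u k v) \<noteq> 0} \<subseteq> {-N..<K}"
  proof
    fix k assume k: "k \<in> {k. smul (rescoef a N k) (Y u k v) \<noteq> 0}"
    have "\<not> k < -N" using k by (auto simp: rescoef_def)
    moreover have "\<not> k \<ge> K" using k assms by auto
    ultimately show "k \<in> {-N..<K}" by auto
  qed
qed

lemma res_add2: "res smul Y a N u (v1 + v2) = res smul Y a N u v1 + res smul Y a N u v2"
proof -
  obtain K1 where K1: "\<forall>k\<ge>K1. Y u k v1 = 0" using trunc by blast
  obtain K2 where K2: "\<forall>k\<ge>K2. Y u k v2 = 0" using trunc by blast
  let ?K = "max K1 K2"
  have a: "\<forall>k\<ge>?K. Y u k v1 = 0" "\<forall>k\<ge>?K. Y u k v2 = 0" "\<forall>k\<ge>?K. Y u k (v1+v2) = 0"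
    using K1 K2 by (auto simp: Y2_add)
  show ?thesis unfolding res_sum[OF a(1)] res_sum[OF a(2)] res_sum[OF a(3)]
    by (simp add: Y2_add scale_right_distrib sum.distrib)
qed

lemma res_scale2: "res smul Y a N u (smul c v) = smul c (res smul Y a N u v)"
proof -
  obtain K where K: "\<forall>k\<ge>K. Y u k v = 0" using trunc by blast
  have a: "\<forall>k\<ge>K. Y u k (smul c v) = 0" using K by (auto simp: Y2_scale)
  show ?thesis unfolding res_sum[OF a] res_sum[OF K]
    by (simp add: Y2_scale scale_sum_right mult.commute)
qed

lemma res_add1: "res smul Y a N (u1 + u2) v = res smul Y a N u1 v + res smul Y a N u2 v"
proof -
  obtain K1 where K1: "\<forall>k\<ge>K1. Y u1 k v = 0" using trunc by blast
  obtain K2 where K2: "\<forall>k\<ge>K2. Y u2 k v = 0" using trunc by blast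
  let ?K = "max K1 K2"
  have a: "\<forall>k\<ge>?K. Y u1 k v = 0" "\<forall>k\<ge>?K. Y u2 k v = 0" "\<forall>k\<ge>?K. Y (u1+u2) k v = 0"
    using K1 K2 by (auto simp: Y1_add)
  show ?thesis unfolding res_sum[OF a(1)] res_sum[OF a(2)] res_sum[OF a(3)]
    by (simp add: Y1_add scale_right_distrib sum.distrib)
qed

lemma res_scale1: "res smul Y a N (smul c u) v = smul c (res smul Y a N u v)"
proof -
  obtain K where K: "\<forall>k\<ge>K. Y u k v = 0" using trunc by blast
  have a: "\<forall>k\<ge>K. Y (smul c u) k v = 0" using K by (auto simp: Y1_scale)
  show ?thesis unfolding res_sum[OF a] res_sum[OF K]
    by (simp add: Y1_scale scale_sum_right mult.commute)
qed

lemma lin_res2: "Vector_Spaces.linear smul smul (res smul Y a N u)"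
  by (rule linI) (simp_all add: res_add2 res_scale2)
lemma lin_res1: "Vector_Spaces.linear smul smul (\<lambda>u. res smul Y a N u v)"
  by (rule linI) (simp_all add: res_add1 res_scale1)

end

lemma roots_sum:
  fixes T :: nat and d :: int
  assumes T: "T > 0"
  shows "(\<Sum>j<T. cis (2*pi*real_of_int d*real j/real T)) = (if int T dvd d then of_nat T else 0)"
proof -
  let ?w = "cis (2*pi*real_of_int d/real T)"
  have pw: "cis (2*pi*real_of_int d*real j/real T) = ?w ^ j" for j
    by (simp add: DeMoivre algebra_simps)
  show ?thesis
  proof (cases "int T dvd d")
    case True
    then obtain k where k: "d = int T * k" by blast
    have "cis (2*pi*real_of_int d*real j/real T) = 1" for j
    proof -
      have "2*pi*real_of_int d*real j/real T = 2*pi*real_of_int (k * int j)"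
        using T by (simp add: k field_simps)
      then show ?thesis by (simp add: cis_multiple_2pi)
    qed
    then show ?thesis using True by simp
  next
    case False
    have w1: "?w \<noteq> 1"
    proof
      assume "?w = 1"
      then have "cos (2*pi*real_of_int d/real T) = 1"
        by (metis Re_complex_of_real cis.sel(1) one_complex.sel(1))
      then obtain n :: int where n: "2*pi*real_of_int d/real T = real_of_int n * 2 * pi"
        using cos_one_2pi_int by blast
      then have "real_of_int d = real_of_int n * real T" using T by (simp add: field_simps)
      then have "d = n * int T" by (metis of_int_eq_iff of_int_mult of_int_of_nat_eq)
      then show False using False by simp
    qed
    have wT: "?w ^ T = 1"
    proof -
      have "?w ^ T = cis (real T * (2*pi*real_of_int d/real T))" by (simp add: DeMoivre)
      also have "real T * (2*pi*real_of_int d/real T) = 2*pi*real_of_int d" using T by simp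
      finally show ?thesis by (simp add: cis_multiple_2pi)
    qed
    have "(\<Sum>j<T. ?w ^ j) = 0" using geometric_sum[OF w1, of T] wT by simp
    then show ?thesis using False pw by simp
  qed
qed

context VActx begin

lemma glin: "Vector_Spaces.linear smul smul g" using aut unfolding va_automorphism_def by blast
lemma gvac: "g vac = vac" using aut unfolding va_automorphism_def by blast

lemma gpow_lin: "Vector_Spaces.linear smul smul (g ^^ j)"
proof (induction j)
  case 0 then show ?case by (simp add: linI)
next
  case (Suc j)
  have "g ^^ Suc j = g o (g ^^ j)" by simp
  then show ?case using Vector_Spaces.linear_compose[OF Suc glin] by (simp add: comp_def)
qed

lemma gpow_vac: "(g ^^ j) vac = vac" by (induction j) (simp_all add: gvac)

lemma proj_lin: "Vector_Spaces.linear smul smul (proj smul g T r)"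
proof (rule linI)
  fix x y
  show "proj smul g T r (x + y) = proj smul g T r x + proj smul g T r y"
    unfolding proj_def by (simp add: linD[OF gpow_lin] scale_right_distrib sum.distrib)
  fix c
  show "proj smul g T r (smul c x) = smul c (proj smul g T r x)"
    unfolding proj_def by (simp add: linD[OF gpow_lin] scale_sum_right mult.commute)
qed

lemma proj_vac: "r < T \<Longrightarrow> proj smul g T r vac = (if r = 0 then vac else 0)"
proof -
  assume r: "r < T"
  have "proj smul g T r vac = smul (1/of_nat T) (smul (\<Sum>j<T. cis (2*pi*real_of_int (int r)*real j/real T)) vac)"
    unfolding proj_def by (simp add: gpow_vac scale_sum_left)
  also have "\<dots> = (if r = 0 then vac else 0)"
    using roots_sum[OF Tpos, of "int r"] r Tpos by (auto simp: zdvd_imp_le)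
  finally show ?thesis .
qed

lemma g_proj: "g (proj smul g T r x) = smul (cis (- 2*pi*real r/real T)) (proj smul g T r x)"
proof -
  define f where "f j = smul (cis (2*pi*real r*(real j - 1)/real T)) ((g ^^ j) x)" for j
  have cs: "cis (2*pi*real r*(real j - 1)/real T) = cis (- 2*pi*real r/real T) * cis (2*pi*real r*real j/real T)" for j
    unfolding cis_mult by (rule arg_cong[where f=cis]) (use Tpos in \<open>simp add: field_simps\<close>)
  have fT: "f T = f 0"
  proof -
    have "cis (2*pi*real r*(real T - 1)/real T) = cis (2*pi*real_of_int (int r)) * cis (- 2*pi*real r/real T)"
      unfolding cis_mult by (rule arg_cong[where f=cis]) (use Tpos in \<open>simp add: field_simps\<close>)
    also have "cis (2*pi*real_of_int (int r)) = 1" by (rule cis_multiple_2pi) simp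
    finally have "cis (2*pi*real r*(real T - 1)/real T) = cis (- 2*pi*real r/real T)" by simp
    then show ?thesis unfolding f_def by (simp add: gT)
  qed
  have "(\<Sum>i<T. f (Suc i)) + f 0 = (\<Sum>i<T. f i) + f T"
    by (metis add.commute sum.lessThan_Suc sum.lessThan_Suc_shift)
  then have sh: "(\<Sum>i<T. f (Suc i)) = (\<Sum>i<T. f i)" using fT by simp
  have "g (proj smul g T r x) = smul (1/of_nat T) (\<Sum>j<T. smul (cis (2*pi*real r*real j/real T)) ((g ^^ Suc j) x))"
    unfolding proj_def by (simp add: linD[OF glin])
  also have "(\<Sum>j<T. smul (cis (2*pi*real r*real j/real T)) ((g ^^ Suc j) x)) = (\<Sum>i<T. f (Suc i))"
    unfolding f_def by simp
  also have "\<dots> = (\<Sum>i<T. f i)" by (rule sh)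
  also have "\<dots> = smul (cis (- 2*pi*real r/real T)) (\<Sum>j<T. smul (cis (2*pi*real r*real j/real T)) ((g ^^ j) x))"
    unfolding f_def scale_sum_right by (rule sum.cong) (simp_all only: cs scale_scale)
  finally show ?thesis unfolding proj_def by (simp add: scale_left_commute)
qed

lemma gpow_proj: "(g ^^ j) (proj smul g T r x) = smul (cis (- 2*pi*real r*real j/real T)) (proj smul g T r x)"
proof (induction j)
  case 0 then show ?case by simp
next
  case (Suc j)
  have "(g ^^ Suc j) (proj smul g T r x) = g (smul (cis (- 2*pi*real r*real j/real T)) (proj smul g T r x))"
    using Suc by simp
  also have "\<dots> = smul (cis (- 2*pi*real r*real j/real T) * cis (- 2*pi*real r/real T)) (proj smul g T r x)"
    by (simp add: linD[OF glin] g_proj)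
  also have "cis (- 2*pi*real r*real j/real T) * cis (- 2*pi*real r/real T) = cis (- 2*pi*real r*real (Suc j)/real T)"
    unfolding cis_mult by (rule arg_cong[where f=cis]) (use Tpos in \<open>simp add: field_simps\<close>)
  finally show ?case .
qed

lemma proj_proj: "s < T \<Longrightarrow> r < T \<Longrightarrow> proj smul g T s (proj smul g T r x) = (if s = r then proj smul g T r x else 0)"
proof -
  assume s: "s < T" and r: "r < T"
  have "proj smul g T s (proj smul g T r x) = smul (1/of_nat T)
      (smul (\<Sum>j<T. cis (2*pi*real_of_int (int s - int r)*real j/real T)) (proj smul g T r x))"
    unfolding proj_def[of smul g T s] gpow_proj
    by (simp add: scale_sum_left cis_mult algebra_simps diff_divide_distrib)
  also have "\<dots> = (if s = r then proj smul g T r x else 0)"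
  proof -
    have "int T dvd (int s - int r) \<longleftrightarrow> s = r"
    proof
      assume "int T dvd (int s - int r)"
      then obtain k where k: "int s - int r = int T * k" by blast
      have "\<bar>int s - int r\<bar> < int T" using s r by simp
      have "k = 0"
      proof (rule ccontr)
        assume "k \<noteq> 0"
        then have "1 \<le> \<bar>k\<bar>" by presburger
        then have "int T * 1 \<le> int T * \<bar>k\<bar>" by (rule mult_left_mono) simp
        then have "\<bar>int T * k\<bar> \<ge> int T" by (simp add: abs_mult)
        then show False using k \<open>\<bar>int s - int r\<bar> < int T\<close> by simp
      qed
      then show "s = r" using k by simp
    qed simp
    then show ?thesis using roots_sum[OF Tpos, of "int s - int r"] Tpos by auto
  qed
  finally show ?thesis .
qed

lemma proj_sum: "(\<Sum>r<T. proj smul g T r x) = x"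
proof -
  have "(\<Sum>r<T. proj smul g T r x) = smul (1/of_nat T) (\<Sum>j<T. smul (\<Sum>r<T. cis (2*pi*real r*real j/real T)) ((g ^^ j) x))"
  proof -
    have "(\<Sum>r<T. proj smul g T r x) = smul (1/of_nat T) (\<Sum>r<T. \<Sum>j<T. smul (cis (2*pi*real r*real j/real T)) ((g ^^ j) x))"
      unfolding proj_def by (simp add: scale_sum_right)
    also have "(\<Sum>r<T. \<Sum>j<T. smul (cis (2*pi*real r*real j/real T)) ((g ^^ j) x)) = (\<Sum>j<T. \<Sum>r<T. smul (cis (2*pi*real r*real j/real T)) ((g ^^ j) x))"
      by (rule sum.swap)
    finally show ?thesis by (simp add: scale_sum_left)
  qed
  also have "(\<Sum>j<T. smul (\<Sum>r<T. cis (2*pi*real r*real j/real T)) ((g ^^ j) x)) = (\<Sum>j<T. if j = 0 then smul (of_nat T) x else 0)"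
  proof (rule sum.cong[OF refl])
    fix j assume j: "j \<in> {..<T}"
    have "(\<Sum>r<T. cis (2*pi*real r*real j/real T)) = (\<Sum>r<T. cis (2*pi*real_of_int (int j)*real r/real T))"
      by (simp add: mult.commute mult.left_commute)
    also have "\<dots> = (if int T dvd int j then of_nat T else 0)" by (rule roots_sum[OF Tpos])
    also have "\<dots> = (if j = 0 then of_nat T else 0)" using j by (auto simp: zdvd_imp_le)
    finally show "smul (\<Sum>r<T. cis (2*pi*real r*real j/real T)) ((g ^^ j) x) = (if j = 0 then smul (of_nat T) x else 0)"
      by simp
  qed
  also have "\<dots> = smul (of_nat T) x" using Tpos by (simp add: sum.delta)
  finally show ?thesis using Tpos by simp
qed

end

lemma fracs_repr:
  assumes T: "T > 0" and m: "m \<in> fracs T"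
  shows "\<exists>k::nat. m = of_nat k / of_nat T \<and> fl m = int (k div T) \<and> bar T m = k mod T"
proof -
  obtain k :: nat where k: "m = of_nat k / of_nat T" using m unfolding fracs_def by blast
  have fl: "\<lfloor>m\<rfloor> = int (k div T)" unfolding k by (simp add: floor_divide_of_nat_eq)
  have h: "(of_nat (T * (k div T) + k mod T) :: rat) = of_nat k" by (simp only: mult_div_mod_eq)
  have e: "(of_nat k :: rat) = of_nat T * of_nat (k div T) + of_nat (k mod T)"
    unfolding h[symmetric] of_nat_add of_nat_mult ..
  have Tn: "(of_nat T :: rat) \<noteq> 0" using T by simp
  have "of_nat T * (m - of_int \<lfloor>m\<rfloor>) = of_nat T * m - of_nat T * of_nat (k div T)"
    unfolding fl by (simp add: right_diff_distrib)
  also have "of_nat T * m = of_nat k" unfolding k using Tn by simp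
  also have "of_nat k - of_nat T * of_nat (k div T) = (of_nat (k mod T) :: rat)" unfolding e by simp
  finally have "of_nat T * (m - of_int \<lfloor>m\<rfloor>) = of_nat (k mod T)" .
  then have "bar T m = k mod T" unfolding bar_def by simp
  then show ?thesis using k fl unfolding fl_def by blast
qed

lemma fracs_fl_nonneg: "T > 0 \<Longrightarrow> m \<in> fracs T \<Longrightarrow> fl m \<ge> 0"
proof -
  assume "T > 0" "m \<in> fracs T"
  then obtain k where "fl m = int (k div T)" using fracs_repr by blast
  then show ?thesis by simp
qed

lemma fracs_bar_lt: "T > 0 \<Longrightarrow> m \<in> fracs T \<Longrightarrow> bar T m < T"
proof -
  assume T: "T > 0" "m \<in> fracs T"
  then obtain k where "bar T m = k mod T" using fracs_repr by blast
  then show ?thesis using T by simp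
qed

lemma fracs_decomp: "T > 0 \<Longrightarrow> m \<in> fracs T \<Longrightarrow> (of_rat m :: complex) = of_int (fl m) + of_nat (bar T m) / of_nat T"
proof -
  assume T: "T > 0" and m: "m \<in> fracs T"
  obtain k where k: "m = of_nat k / of_nat T" "fl m = int (k div T)" "bar T m = k mod T"
    using fracs_repr[OF T m] by blast
  have "(of_rat m :: complex) = of_nat k / of_nat T" unfolding k(1) by (simp add: of_rat_divide)
  also have h: "(of_nat k :: complex) = of_nat T * of_nat (k div T) + of_nat (k mod T)"
  proof -
    have h: "(of_nat (T * (k div T) + k mod T) :: complex) = of_nat k" by (simp only: mult_div_mod_eq)
    show ?thesis unfolding h[symmetric] of_nat_add of_nat_mult ..
  qed
  also have "(of_nat T * of_nat (k div T) + of_nat (k mod T)) / of_nat T = of_int (fl m) + (of_nat (bar T m) :: complex) / of_nat T"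
    unfolding k(2,3) using T by (simp add: add_divide_distrib)
  finally show ?thesis .
qed

context VActx begin

lemma res_zero1[simp]: "res smul Y a N 0 v = 0"
  using linD(3)[OF lin_res1] by blast

lemma res_vac1: "res smul Y a N vac z = smul (rescoef a N (-1)) z"
proof -
  have "(\<lambda>k. smul (rescoef a N k) (Y vac k z)) = (\<lambda>k. if k = -1 then smul (rescoef a N k) z else 0)"
    by (auto simp: vacY)
  then show ?thesis unfolding res_def by (simp only: Sum_any.delta)
qed

lemma lin_sum_scale:
  assumes "\<And>i. Vector_Spaces.linear smul smul (f i)"
  shows "Vector_Spaces.linear smul smul (\<lambda>v. \<Sum>i\<in>A. smul (c i) (f i v))"
proof (rule linI)
  fix x y
  show "(\<Sum>i\<in>A. smul (c i) (f i (x + y))) = (\<Sum>i\<in>A. smul (c i) (f i x)) + (\<Sum>i\<in>A. smul (c i) (f i y))"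
    by (simp only: linD(1)[OF assms] scale_right_distrib sum.distrib)
  fix d
  show "(\<Sum>i\<in>A. smul (c i) (f i (smul d x))) = smul d (\<Sum>i\<in>A. smul (c i) (f i x))"
    by (simp only: linD(2)[OF assms] scale_sum_right scale_left_commute)
qed

lemma lin_if:
  assumes "Vector_Spaces.linear smul smul F"
  shows "Vector_Spaces.linear smul smul (\<lambda>v. if P then F v else 0)"
  using assms by (cases P) (simp_all add: linI)

lemma lin_bulhom2: "Vector_Spaces.linear smul smul (bul_hom smul Y T r m p n u)"
proof -
  have e: "bul_hom smul Y T r m p n u = (\<lambda>v. if (int (bar T p) - int (bar T n)) mod int T = int r mod int T then
       (\<Sum>i\<in>{0..nat (fl p)}.
          smul ((-1) ^ i * (of_int (fl m + fl n - fl p - 1 + delta T (bar T m) r + delta T (bar T n) (T - r) + int i) gchoose i))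
            (res smul Y (-1 + of_int (fl m) + of_int (delta T (bar T m) r) + of_nat r / of_nat T)
                 (fl m + fl n - fl p + delta T (bar T m) r + delta T (bar T n) (T - r) + int i) u v))
     else 0)" by (rule ext) (simp only: bul_hom_def)
  show ?thesis unfolding e by (intro lin_if lin_sum_scale lin_res2)
qed

lemma lin_bulhom1: "Vector_Spaces.linear smul smul (\<lambda>u. bul_hom smul Y T r m p n u v)"
  unfolding bul_hom_def by (intro lin_if lin_sum_scale lin_res1)

lemma lin_bul2: "Vector_Spaces.linear smul smul (bul smul Y g T m p n a)"
proof -
  have e: "bul smul Y g T m p n a = (\<lambda>b. \<Sum>r<T. smul 1 (bul_hom smul Y T r m p n (proj smul g T r a) b))"
    by (rule ext) (simp add: bul_def)
  show ?thesis unfolding e by (intro lin_sum_scale lin_bulhom2)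
qed

lemma lin_bul1: "Vector_Spaces.linear smul smul (\<lambda>a. bul smul Y g T m p n a b)"
proof -
  have e: "(\<lambda>a. bul smul Y g T m p n a b) = (\<lambda>a. \<Sum>r<T. smul 1 (((\<lambda>u. bul_hom smul Y T r m p n u b) o proj smul g T r) a))"
    by (rule ext) (simp add: bul_def)
  show ?thesis unfolding e
    by (intro lin_sum_scale Vector_Spaces.linear_compose[OF proj_lin] lin_bulhom1)
qed

lemma lin_diamhom1: "Vector_Spaces.linear smul smul (\<lambda>u. diam_hom smul Y T r m n u v)"
  unfolding diam_hom_def by (rule lin_res1)

lemma bulhom_zero1[simp]: "bul_hom smul Y T r m p n 0 v = 0"
  using linD(3)[OF lin_bulhom1] by blast
lemma diamhom_zero1[simp]: "diam_hom smul Y T r m n 0 v = 0"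
  using linD(3)[OF lin_diamhom1] by blast

lemma left_unit:
  assumes m: "m \<in> fracs T" and n: "n \<in> fracs T"
  shows "bul smul Y g T m n n vac z = z"
proof -
  have "bul smul Y g T m n n vac z = (\<Sum>r<T. if r = 0 then bul_hom smul Y T 0 m n n vac z else 0)"
    unfolding bul_def by (rule sum.cong) (auto simp: proj_vac)
  also have "\<dots> = bul_hom smul Y T 0 m n n vac z" using Tpos by (simp add: sum.delta)
  also have "\<dots> = z"
  proof -
    obtain km where km: "fl m = int km" using fracs_fl_nonneg[OF Tpos m] by (metis nonneg_eq_int)
    have d1: "delta T (bar T m) 0 = 1" using Tpos by (simp add: delta_def)
    have d2: "delta T (bar T n) (T - 0) = 0" by (simp add: delta_def)
    have rc: "rescoef (of_int (fl m)) (fl m + 1 + int i) (-1) = (if i = 0 then 1 else 0)" for i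
    proof -
      have "rescoef (of_int (fl m)) (fl m + 1 + int i) (-1) = (of_nat km gchoose (km + i))"
        by (simp add: rescoef_def km Lpow_def nat_add_distrib)
      also have "\<dots> = of_nat (km choose (km + i))" by (simp add: binomial_gbinomial)
      also have "\<dots> = (if i = 0 then 1 else 0)" by simp
      finally show ?thesis .
    qed
    have rc0: "rescoef (of_int (fl m)) (fl m + 1) (-1) = 1" using rc[of 0] by simp
    have "bul_hom smul Y T 0 m n n vac z = (\<Sum>i\<in>{0..nat (fl n)}. if i = 0 then z else 0)"
      unfolding bul_hom_def d1 d2
      by (rule trans[OF if_P], simp, rule sum.cong, simp_all add: res_vac1 rc rc0)
    also have "\<dots> = z" by (simp add: sum.delta)
    finally show ?thesis .
  qed
  finally show ?thesis .
qed

end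

lemma coef_m2: "(-1::complex) ^ i * ((- 2) gchoose i) = of_nat i + 1"
proof -
  have a: "((- 2) gchoose i :: complex) = (-1) ^ i * ((2 + of_nat i - 1) gchoose i)"
    using gbinomial_minus[of "2::complex" i] by simp
  have b: "(2 + of_nat i - 1 :: complex) = of_nat (Suc i)" by simp
  have c: "(of_nat (Suc i) gchoose i :: complex) = of_nat (Suc i)"
    by (simp only: binomial_gbinomial[symmetric] binomial_Suc_n)
  have "((- 2) gchoose i :: complex) = (-1) ^ i * of_nat (Suc i)" using a unfolding b c .
  then show ?thesis by (simp add: power_mult_distrib[symmetric])
qed

lemma coef_m2': "(-1::complex) ^ i * (of_int (- 2) gchoose i) = of_nat i + 1"
  using coef_m2 by simp

context VActx begin

definition DD :: "'v \<Rightarrow> 'v" where "DD u = Y u (-2) vac"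

lemma DY: "Y (DD y) q w = smul (- of_int q) (Y y (q - 1) w)"
proof -
  have B: "Sum_any (\<lambda>i::nat. smul (of_int 0 gchoose i) (Y (Y y (-2 + int i) vac) (0 + q - int i) w))
        = Sum_any (\<lambda>i::nat. smul ((-1) ^ i * (of_int (-2) gchoose i))
              (Y y (0 + (-2) - int i) (Y vac (q + int i) w)
               - smul ((-1::complex) powi (-2)) (Y vac (q + (-2) - int i) (Y y (0 + int i) w))))"
    by (rule borch)
  have L: "(\<lambda>i::nat. smul (of_int 0 gchoose i) (Y (Y y (-2 + int i) vac) (0 + q - int i) w))
       = (\<lambda>i. if i = 0 then Y (DD y) q w else 0)"
    by (rule ext) (simp add: gbinomial_0_left DD_def)
  have pw: "((-1::complex) powi (-2)) = 1" by (simp add: power_int_def)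
  have R: "(\<lambda>i::nat. smul ((-1) ^ i * (of_int (-2) gchoose i))
              (Y y (0 + (-2) - int i) (Y vac (q + int i) w)
               - smul ((-1::complex) powi (-2)) (Y vac (q + (-2) - int i) (Y y (0 + int i) w))))
       = (\<lambda>i. smul (of_nat i + 1) ((if q + int i = -1 then Y y (-2 - int i) w else 0)
                                   - (if q - 2 - int i = -1 then Y y (int i) w else 0)))"
    by (rule ext) (simp add: coef_m2 coef_m2' pw vacY)
  have "Y (DD y) q w = Sum_any (\<lambda>i. smul (of_nat i + 1) ((if q + int i = -1 then Y y (-2 - int i) w else 0)
                                   - (if q - 2 - int i = -1 then Y y (int i) w else 0)))"
    using B unfolding L R by (simp only: Sum_any.delta)
  also have "\<dots> = smul (- of_int q) (Y y (q - 1) w)"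
  proof (cases "q < 0")
    case True
    define i0 where "i0 = nat (-1 - q)"
    have "(\<lambda>i. smul (of_nat i + 1) ((if q + int i = -1 then Y y (-2 - int i) w else 0)
                                   - (if q - 2 - int i = -1 then Y y (int i) w else 0)))
        = (\<lambda>i. if i = i0 then smul (- of_int q) (Y y (q - 1) w) else 0)"
    proof (rule ext)
      fix i
      show "smul (of_nat i + 1) ((if q + int i = -1 then Y y (-2 - int i) w else 0)
                                   - (if q - 2 - int i = -1 then Y y (int i) w else 0))
          = (if i = i0 then smul (- of_int q) (Y y (q - 1) w) else 0)"
      proof (cases "i = i0")
        case True
        have ii: "int i = -1 - q" using \<open>q < 0\<close> True unfolding i0_def by simp
        have e1: "(of_nat i + 1 :: complex) = - of_int q"
        proof -
          have "(of_nat i :: complex) = of_int (int i)" by simp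
          also have "\<dots> = of_int (-1 - q)" using ii by simp
          finally show ?thesis by simp
        qed
        have e2: "- 2 - int i = q - 1" using ii by simp
        have e3: "q + int i = -1" using ii by simp
        have e4: "\<not> (q - 2 - int i = -1)" using ii \<open>q < 0\<close> by simp
        show ?thesis unfolding if_P[OF True] if_P[OF e3] if_not_P[OF e4] e1 e2 by simp
      next
        case False
        then have "q + int i \<noteq> -1" using \<open>q < 0\<close> unfolding i0_def by auto
        moreover have "q - 2 - int i \<noteq> -1" using \<open>q < 0\<close> by simp
        ultimately show ?thesis using False by simp
      qed
    qed
    then show ?thesis by (simp only: Sum_any.delta)
  next
    case False
    show ?thesis
    proof (cases "q = 0")
      case True
      then have "(\<lambda>i. smul (of_nat i + 1) ((if q + int i = -1 then Y y (-2 - int i) w else 0)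
                                   - (if q - 2 - int i = -1 then Y y (int i) w else 0))) = (\<lambda>i. 0)"
        by (rule_tac ext) auto
      then show ?thesis using True by simp
    next
      case q0: False
      define i0 where "i0 = nat (q - 1)"
      have "(\<lambda>i. smul (of_nat i + 1) ((if q + int i = -1 then Y y (-2 - int i) w else 0)
                                   - (if q - 2 - int i = -1 then Y y (int i) w else 0)))
          = (\<lambda>i. if i = i0 then smul (- of_int q) (Y y (q - 1) w) else 0)"
      proof (rule ext)
        fix i
        show "smul (of_nat i + 1) ((if q + int i = -1 then Y y (-2 - int i) w else 0)
                                     - (if q - 2 - int i = -1 then Y y (int i) w else 0))
            = (if i = i0 then smul (- of_int q) (Y y (q - 1) w) else 0)"
        proof (cases "i = i0")
          case True
          have ii: "int i = q - 1" using False q0 True unfolding i0_def by simp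
          have e1: "(of_nat i + 1 :: complex) = of_int q"
          proof -
            have "(of_nat i :: complex) = of_int (int i)" by simp
            also have "\<dots> = of_int (q - 1)" using ii by simp
            finally show ?thesis by simp
          qed
          have e3: "q - 2 - int i = -1" using ii by simp
          have e4: "\<not> (q + int i = -1)" using ii False q0 by simp
          show ?thesis unfolding if_P[OF True] if_P[OF e3] if_not_P[OF e4] e1 ii[symmetric] by simp
        next
          case F: False
          then have "q - 2 - int i \<noteq> -1" using False q0 unfolding i0_def by auto
          moreover have "q + int i \<noteq> -1" using False by simp
          ultimately show ?thesis using F by simp
        qed
      qed
      then show ?thesis by (simp only: Sum_any.delta)
    qed
  qed
  finally show ?thesis .
qed

end

context VActx begin

lemma DpowY: "Y ((DD ^^ j) y) q w = smul (\<Prod>i<j. - of_int (q - int i)) (Y y (q - int j) w)"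
proof (induction j arbitrary: q)
  case 0 then show ?case by simp
next
  case (Suc j)
  have "Y ((DD ^^ Suc j) y) q w = Y (DD ((DD ^^ j) y)) q w" by simp
  also have "\<dots> = smul (- of_int q) (smul (\<Prod>i<j. - of_int (q - 1 - int i)) (Y y (q - 1 - int j) w))"
    by (simp add: DY Suc)
  also have "\<dots> = smul (\<Prod>i<Suc j. - of_int (q - int i)) (Y y (q - int (Suc j)) w)"
  proof -
    have "(\<Prod>i<Suc j. - (of_int (q - int i) :: complex)) = (- of_int (q - int 0)) * (\<Prod>i<j. - of_int (q - int (Suc i)))"
      by (rule prod.lessThan_Suc_shift)
    also have "(\<Prod>i<j. - (of_int (q - int (Suc i)) :: complex)) = (\<Prod>i<j. - of_int (q - 1 - int i))"
      by (rule prod.cong) (simp_all add: algebra_simps)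
    finally have e1: "(\<Prod>i<Suc j. - (of_int (q - int i) :: complex)) = (- of_int q) * (\<Prod>i<j. - of_int (q - 1 - int i))" by simp
    have e2: "q - int (Suc j) = q - 1 - int j" by simp
    show ?thesis unfolding e1 e2 scale_scale ..
  qed
  finally show ?case .
qed

lemma Ycreate: "Y y (- int j - 1) vac = smul (1 / fact j) ((DD ^^ j) y)"
proof -
  have "(DD ^^ j) y = Y ((DD ^^ j) y) (-1) vac" by (simp add: creat1)
  also have "\<dots> = smul (\<Prod>i<j. - of_int (-1 - int i)) (Y y (-1 - int j) vac)" by (rule DpowY)
  also have "(\<Prod>i<j. - of_int (-1 - int i)) = (fact j :: complex)"
  proof -
    have "(\<Prod>i<j. - of_int (-1 - int i)) = (\<Prod>i<j. (of_nat (Suc i) :: complex))"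
      by (rule prod.cong) simp_all
    also have "\<dots> = of_nat (\<Prod>i<j. Suc i)" by simp
    also have "\<dots> = fact j" by (simp add: fact_prod_Suc lessThan_atLeast0)
    finally show ?thesis .
  qed
  finally have "(DD ^^ j) y = smul (fact j) (Y y (-1 - int j) vac)" .
  then have "smul (1 / fact j) ((DD ^^ j) y) = Y y (-1 - int j) vac" by simp
  moreover have e: "- int j - 1 = -1 - int j" by simp
  ultimately show ?thesis unfolding e by simp
qed

lemma DpowS: "(DD ^^ j) y - smul ((- c) ^ j) y \<in> span {Y u (-2) vac + smul c u | u. True}"
proof (induction j)
  case 0 then show ?case by (simp add: span_zero)
next
  case (Suc j)
  let ?S = "span {Y u (-2) vac + smul c u | u. True}"
  have g: "DD ((DD ^^ j) y) + smul c ((DD ^^ j) y) \<in> ?S"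
    by (rule span_base) (auto simp: DD_def)
  have "(DD ^^ Suc j) y - smul ((- c) ^ Suc j) y
      = (DD ((DD ^^ j) y) + smul c ((DD ^^ j) y)) + smul (- c) ((DD ^^ j) y - smul ((- c) ^ j) y)"
    by (simp add: scale_right_diff_distrib algebra_simps)
  also have "\<dots> \<in> ?S" by (rule span_add[OF g span_scale[OF Suc]])
  finally show ?case .
qed

lemma res_vac_sum: "res smul Y a N y vac = (\<Sum>j<nat N. smul (rescoef a N (- int j - 1)) (Y y (- int j - 1) vac))"
proof -
  have "res smul Y a N y vac = (\<Sum>k\<in>{-N..<0}. smul (rescoef a N k) (Y y k vac))"
    by (rule res_sum) (simp add: creat0)
  also have "\<dots> = (\<Sum>j<nat N. smul (rescoef a N (- int j - 1)) (Y y (- int j - 1) vac))"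
    by (rule sum.reindex_bij_witness[of _ "\<lambda>k. - int k - 1" "\<lambda>k. nat (- k - 1)"]) auto
  finally show ?thesis .
qed

lemma Kres: "res smul Y a N y vac - smul (\<Sum>j<nat N. rescoef a N (- int j - 1) * (- c) ^ j / fact j) y
     \<in> span {Y u (-2) vac + smul c u | u. True}"
proof -
  let ?r = "\<lambda>j. rescoef a N (- int j - 1)"
  have "res smul Y a N y vac - smul (\<Sum>j<nat N. ?r j * (- c) ^ j / fact j) y
      = (\<Sum>j<nat N. smul (?r j / fact j) ((DD ^^ j) y - smul ((- c) ^ j) y))"
    unfolding res_vac_sum Ycreate
    by (simp add: scale_sum_left scale_right_diff_distrib sum_subtractf mult.commute)
  also have "\<dots> \<in> span {Y u (-2) vac + smul c u | u. True}"
    by (intro span_sum span_scale DpowS)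
  finally show ?thesis .
qed

end

lemma XLser: "fps_X * Lser = fps_ln (1::complex)"
  by (rule fps_ext) (simp add: Lser_def fps_ln_nth)

lemma exp_ln_binomial: "fps_exp l oo fps_ln (1::complex) = fps_binomial l"
proof -
  let ?P = "fps_ln (1::complex)"
  let ?E = "fps_exp l oo ?P"
  have P0: "fps_nth ?P 0 = 0" by simp
  have u: "fps_nth (1 + fps_X :: complex fps) 0 \<noteq> 0" by simp
  have "fps_deriv ?E = (fps_deriv (fps_exp l) oo ?P) * fps_deriv ?P"
    by (rule fps_compose_deriv[OF P0])
  also have "\<dots> = fps_const l * ?E * inverse (1 + fps_X)"
    by (simp add: fps_ln_deriv fps_const_mult_apply_left)
  also have "\<dots> = fps_const l * ?E / (1 + fps_X)"
    by (simp add: fps_divide_unit[OF u])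
  finally have "fps_deriv ?E = fps_const l * ?E / (1 + fps_X)" .
  moreover have "fps_nth ?E 0 = 1" by simp
  ultimately show ?thesis using fps_binomial_ODE_unique'[of ?E l] by blast
qed

lemma CI:
  assumes N: "N \<ge> 1"
  shows "(\<Sum>j<nat N. rescoef a N (- int j - 1) * l ^ j / fact j) = (a + l) gchoose (nat N - 1)"
proof -
  define M where "M = nat N - 1"
  have NM: "nat N = Suc M" using N unfolding M_def by simp
  let ?A = "fps_binomial a"
  let ?P = "fps_ln (1::complex)"
  let ?F = "\<Sum>j\<le>M. fps_const (l ^ j / fact j) * ?P ^ j"
  have t: "rescoef a N (- int j - 1) * l ^ j / fact j = (l ^ j / fact j) * fps_nth (?A * ?P ^ j) M" if j: "j < nat N" for j
  proof -
    have "rescoef a N (- int j - 1) = fps_nth (?A * Lser ^ j) (M - j)"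
    proof -
      have jN: "int j < N" using j by arith
      have h1: "\<not> N + (- int j - 1) < 0" using jN by simp
      have h2: "nat (N + (- int j - 1)) = M - j" using jN N unfolding M_def by arith
      show ?thesis unfolding rescoef_def Lpow_def using h1 h2 by simp
    qed
    also have "\<dots> = fps_nth (fps_X ^ j * (?A * Lser ^ j)) M"
      using j NM by (simp add: fps_X_power_mult_nth)
    also have "fps_X ^ j * (?A * Lser ^ j) = ?A * ?P ^ j"
      unfolding XLser[symmetric] by (simp add: power_mult_distrib algebra_simps)
    finally show ?thesis by simp
  qed
  have "(\<Sum>j<nat N. rescoef a N (- int j - 1) * l ^ j / fact j) = (\<Sum>j\<le>M. (l ^ j / fact j) * fps_nth (?A * ?P ^ j) M)"
    unfolding NM lessThan_Suc_atMost[symmetric] using t NM by (intro sum.cong) auto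
  also have "\<dots> = fps_nth (?A * ?F) M"
  proof -
    have "?A * ?F = (\<Sum>j\<le>M. fps_const (l ^ j / fact j) * (?A * ?P ^ j))"
      by (simp add: sum_distrib_left mult.left_commute)
    then show ?thesis by (simp add: fps_sum_nth)
  qed
  also have "\<dots> = fps_nth (?A * (fps_exp l oo ?P)) M"
  proof -
    have "fps_nth ?F k = fps_nth (fps_exp l oo ?P) k" if k: "k \<le> M" for k
    proof -
      have z: "fps_nth (?P ^ j) k = 0" if "j > k" for j
        using startsby_zero_power_prefix[of ?P j] that by simp
      have "fps_nth ?F k = (\<Sum>j\<le>M. (l ^ j / fact j) * fps_nth (?P ^ j) k)" by (simp add: fps_sum_nth)
      also have "\<dots> = (\<Sum>j\<in>{0..k}. (l ^ j / fact j) * fps_nth (?P ^ j) k)"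
        by (rule sum.mono_neutral_right) (use k z in auto)
      also have "\<dots> = fps_nth (fps_exp l oo ?P) k" by (simp add: fps_compose_nth)
      finally show ?thesis .
    qed
    then show ?thesis by (simp add: fps_mult_nth)
  qed
  also have "\<dots> = (a + l) gchoose M"
    by (simp add: exp_ln_binomial fps_binomial_add_mult[symmetric])
  finally show ?thesis unfolding M_def .
qed

lemma gchoose_nz:
  assumes "\<And>j::nat. z \<noteq> of_nat j"
  shows "(z::complex) gchoose k \<noteq> 0"
proof
  assume "z gchoose k = 0"
  then have "pochhammer (z - of_nat k + 1) k = 0" unfolding gbinomial_pochhammer' by simp
  then obtain i where i: "i < k" "z - of_nat k + 1 = - of_nat i" unfolding pochhammer_eq_0_iff by blast
  then have "z = of_nat (k - 1 - i)" by (simp add: of_nat_diff algebra_simps)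
  then show False using assms by blast
qed

lemma not_nat_frac:
  assumes T: "T > 0" and nd: "\<not> int T dvd q"
  shows "of_int c0 + of_int q / of_nat T \<noteq> (of_nat j :: complex)"
proof
  assume "of_int c0 + of_int q / of_nat T = (of_nat j :: complex)"
  then have "(of_int q :: complex) = of_nat T * (of_nat j - of_int c0)" using T by (simp add: field_simps)
  then have "(of_int q :: complex) = of_int (int T * (int j - c0))" by simp
  then have "q = int T * (int j - c0)" by (simp only: of_int_eq_iff)
  then show False using nd by simp
qed

lemma r0_facts:
  fixes bm bn T :: nat
  assumes bm: "bm < T" and bn: "bn < T"
  defines "r0 \<equiv> nat ((int bm - int bn) mod int T)"
  shows "r0 < T" "delta T bm r0 + delta T bn (T - r0) = 1"
    "int r0 + int bn - int bm = int T * (1 - delta T bm r0)"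
    "\<And>r. r < T \<Longrightarrow> ((int bm - int bn) mod int T = int r mod int T) \<longleftrightarrow> r = r0"
    "\<And>r. r < T \<Longrightarrow> int T dvd (int r + int bn - int bm) \<longleftrightarrow> r = r0"
proof -
  have T: "T > 0" using bm by simp
  show r0T: "r0 < T" unfolding r0_def using T by (simp add: nat_less_iff)
  show "delta T bm r0 + delta T bn (T - r0) = 1"
       "int r0 + int bn - int bm = int T * (1 - delta T bm r0)"
  proof -
    have "(bn \<le> bm \<and> r0 = bm - bn) \<or> (bm < bn \<and> r0 = T + bm - bn)"
    proof (cases "bn \<le> bm")
      case True
      then have "(int bm - int bn) mod int T = int bm - int bn" using bm by (simp add: mod_pos_pos_trivial)
      then show ?thesis using True unfolding r0_def by simp
    next
      case False
      have "(int bm - int bn) mod int T = (int bm - int bn + int T) mod int T" by simp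
      also have "\<dots> = int bm - int bn + int T" using bm bn False by (intro mod_pos_pos_trivial) auto
      finally have "(int bm - int bn) mod int T = int bm - int bn + int T" .
      then show ?thesis using False unfolding r0_def by simp
    qed
    then show "delta T bm r0 + delta T bn (T - r0) = 1"
       "int r0 + int bn - int bm = int T * (1 - delta T bm r0)"
      using bm bn unfolding delta_def by auto
  qed
  show "\<And>r. r < T \<Longrightarrow> ((int bm - int bn) mod int T = int r mod int T) \<longleftrightarrow> r = r0"
  proof -
    fix r assume r: "r < T"
    have "int r mod int T = int r" using r by simp
    moreover have "int r0 = (int bm - int bn) mod int T" unfolding r0_def using T by simp
    ultimately show "((int bm - int bn) mod int T = int r mod int T) \<longleftrightarrow> r = r0" by auto
  qed
  show "\<And>r. r < T \<Longrightarrow> int T dvd (int r + int bn - int bm) \<longleftrightarrow> r = r0"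
  proof -
    fix r assume r: "r < T"
    have "int T dvd (int r + int bn - int bm) \<longleftrightarrow> int r mod int T = (int bm - int bn) mod int T"
      by (simp add: mod_eq_dvd_iff algebra_simps)
    also have "\<dots> \<longleftrightarrow> int r = int r0" using r T unfolding r0_def by simp
    finally show "int T dvd (int r + int bn - int bm) \<longleftrightarrow> r = r0" by simp
  qed
qed

lemma set_plus_eq: "A + B = {x + y | x y. x \<in> A \<and> y \<in> B}"
  by (auto simp: set_plus_def)

context VActx begin

lemma Kfull: "N \<ge> 1 \<Longrightarrow> res smul Y a N y vac - smul ((a - c) gchoose (nat N - 1)) y
     \<in> span {Y u (-2) vac + smul c u | u. True}"
  using Kres[of a N y c] CI[of N a "- c"] by simp

lemma subspace_O1: "subspace (O1 smul Y vac g T n m)"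
  unfolding O1_def set_plus_eq by (intro subspace_sums subspace_span)

lemma O1_S: "z \<in> span {Y u (-2) vac + smul (of_rat (m - n)) u | u. True} \<Longrightarrow> z \<in> O1 smul Y vac g T n m"
proof -
  assume z: "z \<in> span {Y u (-2) vac + smul (of_rat (m - n)) u | u. True}"
  have "0 + z \<in> O1 smul Y vac g T n m" unfolding O1_def by (intro set_plus_intro span_zero z)
  then show ?thesis by simp
qed

lemma O1_D: "diam smul Y g T m n u v \<in> O1 smul Y vac g T n m"
proof -
  have "diam smul Y g T m n u v + 0 \<in> O1 smul Y vac g T n m"
    unfolding O1_def by (intro set_plus_intro span_base span_zero) auto
  then show ?thesis by simp
qed

lemma RU:
  assumes m: "m \<in> fracs T" and n: "n \<in> fracs T"
  shows "x - bul smul Y g T m m n x vac \<in> O1 smul Y vac g T n m"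
proof -
  let ?c = "(of_rat (m - n) :: complex)"
  let ?S = "span {Y u (-2) vac + smul ?c u | u. True}"
  let ?O = "O1 smul Y vac g T n m"
  define bm where "bm = bar T m"
  define bn where "bn = bar T n"
  define r0 where "r0 = nat ((int bm - int bn) mod int T)"
  have bmT: "bm < T" unfolding bm_def by (rule fracs_bar_lt[OF Tpos m])
  have bnT: "bn < T" unfolding bn_def by (rule fracs_bar_lt[OF Tpos n])
  note rf = r0_facts[OF bmT bnT, folded r0_def]
  have Tn: "(of_nat T :: complex) \<noteq> 0" using Tpos by simp
  have cdec: "?c = of_int (fl m) + of_nat bm / of_nat T - (of_int (fl n) + of_nat bn / of_nat T)"
    unfolding bm_def bn_def of_rat_diff using fracs_decomp[OF Tpos m] fracs_decomp[OF Tpos n] by simp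
  have subO: "subspace ?O" by (rule subspace_O1)
  obtain kn where kn: "fl n = int kn" using fracs_fl_nonneg[OF Tpos n] nonneg_int_cases by blast
  have B: "y - bul_hom smul Y T r0 m m n y vac \<in> ?S" for y
  proof -
    define d1 where "d1 = delta T bm r0"
    define d2 where "d2 = delta T bn (T - r0)"
    have d12: "d1 + d2 = 1" unfolding d1_def d2_def by (rule rf(2))
    define aa where "aa = -1 + of_int (fl m) + of_int d1 + of_nat r0 / (of_nat T :: complex)"
    have aac: "aa - ?c = of_int (fl n)"
    proof -
      have "(of_nat r0 + of_nat bn - of_nat bm :: complex) = of_int (int r0 + int bn - int bm)" by simp
      also have "\<dots> = of_nat T * (1 - of_int d1)" unfolding rf(3) d1_def by simp
      finally have e: "(of_nat r0 + of_nat bn - of_nat bm :: complex) = of_nat T * (1 - of_int d1)" .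
      have "aa - ?c = -1 + of_int d1 + of_int (fl n) + (of_nat r0 + of_nat bn - of_nat bm) / of_nat T"
        unfolding aa_def cdec using Tn by (simp add: field_simps)
      also have "\<dots> = of_int (fl n)" unfolding e using Tn by simp
      finally show ?thesis .
    qed
    define N where "N i = fl m + fl n - fl m + d1 + d2 + int i" for i :: nat
    define co where "co i = (-1) ^ i * (of_int (fl m + fl n - fl m - 1 + d1 + d2 + int i) gchoose i :: complex)" for i :: nat
    have N1: "N i \<ge> 1" for i unfolding N_def using d12 kn by simp
    have G: "(aa - ?c) gchoose (nat (N i) - 1) = (if i = 0 then 1 else 0)" for i
    proof -
      have "nat (N i) - 1 = kn + i" unfolding N_def using d12 kn by simp
      then have "(aa - ?c) gchoose (nat (N i) - 1) = of_nat kn gchoose (kn + i)" unfolding aac kn by simp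
      also have "\<dots> = of_nat (kn choose (kn + i))" by (simp add: binomial_gbinomial)
      finally show ?thesis by simp
    qed
    have co0: "co 0 = 1" unfolding co_def by simp
    have cond: "(int (bar T m) - int (bar T n)) mod int T = int r0 mod int T"
      using rf(4)[OF rf(1)] unfolding bm_def bn_def by blast
    have bh: "bul_hom smul Y T r0 m m n y vac = (\<Sum>i\<in>{0..nat (fl m)}. smul (co i) (res smul Y aa (N i) y vac))"
      unfolding bul_hom_def if_P[OF cond] co_def N_def aa_def d1_def d2_def bm_def bn_def ..
    have "(\<Sum>i\<in>{0..nat (fl m)}. smul (co i) (smul ((aa - ?c) gchoose (nat (N i) - 1)) y))
        = (\<Sum>i\<in>{0..nat (fl m)}. if i = 0 then y else 0)"
      unfolding G by (rule sum.cong) (simp_all add: co0)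
    also have "\<dots> = y" by (simp add: sum.delta)
    finally have yeq: "(\<Sum>i\<in>{0..nat (fl m)}. smul (co i) (smul ((aa - ?c) gchoose (nat (N i) - 1)) y)) = y" .
    have "(\<Sum>i\<in>{0..nat (fl m)}. smul (co i) (smul ((aa - ?c) gchoose (nat (N i) - 1)) y))
        - (\<Sum>i\<in>{0..nat (fl m)}. smul (co i) (res smul Y aa (N i) y vac))
        = y - bul_hom smul Y T r0 m m n y vac"
      by (simp only: yeq bh)
    moreover have "(\<Sum>i\<in>{0..nat (fl m)}. smul (co i) (smul ((aa - ?c) gchoose (nat (N i) - 1)) y))
        - (\<Sum>i\<in>{0..nat (fl m)}. smul (co i) (res smul Y aa (N i) y vac))
        = (\<Sum>i\<in>{0..nat (fl m)}. smul (- co i) (res smul Y aa (N i) y vac - smul ((aa - ?c) gchoose (nat (N i) - 1)) y))"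
      unfolding sum_subtractf[symmetric] by (rule sum.cong) (simp_all add: scale_right_diff_distrib)
    moreover have "(\<Sum>i\<in>{0..nat (fl m)}. smul (- co i) (res smul Y aa (N i) y vac - smul ((aa - ?c) gchoose (nat (N i) - 1)) y)) \<in> ?S"
      by (rule span_sum, rule span_scale, rule Kfull, rule N1)
    ultimately show ?thesis by simp
  qed
  have C: "proj smul g T r x \<in> ?O" if r: "r < T" "r \<noteq> r0" for r
  proof -
    let ?y = "proj smul g T r x"
    define d1 where "d1 = delta T bm r"
    define d2 where "d2 = delta T bn (T - r)"
    define ar where "ar = -1 + of_int d1 + of_int (fl m) + of_nat r / (of_nat T :: complex)"
    define Nr where "Nr = fl m + fl n + d1 + d2 + 1"
    have Nr1: "Nr \<ge> 1" unfolding Nr_def d1_def d2_def delta_def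
      using fracs_fl_nonneg[OF Tpos m] fracs_fl_nonneg[OF Tpos n] by simp
    have dm: "diam smul Y g T m n ?y vac = res smul Y ar Nr ?y vac"
    proof -
      have "diam smul Y g T m n ?y vac = (\<Sum>s<T. if s = r then diam_hom smul Y T r m n ?y vac else 0)"
        unfolding diam_def proof (rule sum.cong[OF refl])
          fix s assume s: "s \<in> {..<T}"
          show "diam_hom smul Y T s m n (proj smul g T s ?y) vac = (if s = r then diam_hom smul Y T r m n ?y vac else 0)"
            using s r by (simp add: proj_proj)
        qed
      also have "\<dots> = diam_hom smul Y T r m n ?y vac" using r by (simp add: sum.delta)
      also have "\<dots> = res smul Y ar Nr ?y vac"
        unfolding diam_hom_def ar_def Nr_def d1_def d2_def bm_def bn_def ..
      finally show ?thesis .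
    qed
    let ?G = "(ar - ?c) gchoose (nat Nr - 1)"
    have arc: "ar - ?c = of_int (-1 + d1 + fl n) + of_int (int r + int bn - int bm) / of_nat T"
      unfolding ar_def cdec using Tn by (simp add: field_simps)
    have nd: "\<not> int T dvd (int r + int bn - int bm)" using rf(5)[OF r(1)] r(2) by simp
    have Gnz: "?G \<noteq> 0"
      by (rule gchoose_nz) (unfold arc, rule not_nat_frac[OF Tpos nd])
    have "smul ?G ?y = diam smul Y g T m n ?y vac - (res smul Y ar Nr ?y vac - smul ?G ?y)"
      unfolding dm by simp
    also have "\<dots> \<in> ?O"
      by (intro subspace_diff[OF subO] O1_D O1_S Kfull Nr1)
    finally have "smul ?G ?y \<in> ?O" .
    then have "smul (1 / ?G) (smul ?G ?y) \<in> ?O" by (rule subspace_scale[OF subO])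
    then show ?thesis using Gnz by simp
  qed
  have bulx: "bul smul Y g T m m n x vac = (\<Sum>r<T. if r = r0 then bul_hom smul Y T r0 m m n (proj smul g T r0 x) vac else 0)"
    unfolding bul_def
  proof (rule sum.cong[OF refl])
    fix r assume r: "r \<in> {..<T}"
    show "bul_hom smul Y T r m m n (proj smul g T r x) vac = (if r = r0 then bul_hom smul Y T r0 m m n (proj smul g T r0 x) vac else 0)"
    proof (cases "r = r0")
      case False
      then have "\<not> ((int (bar T m) - int (bar T n)) mod int T = int r mod int T)"
        using rf(4)[of r] r unfolding bm_def bn_def by simp
      then show ?thesis using False unfolding bul_hom_def by simp
    qed simp
  qed
  have "(\<Sum>r<T. proj smul g T r x) - (\<Sum>r<T. if r = r0 then bul_hom smul Y T r0 m m n (proj smul g T r0 x) vac else 0)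
     = (\<Sum>r<T. if r = r0 then proj smul g T r0 x - bul_hom smul Y T r0 m m n (proj smul g T r0 x) vac else proj smul g T r x)"
    unfolding sum_subtractf[symmetric] by (rule sum.cong) auto
  then have "x - bul smul Y g T m m n x vac = (\<Sum>r<T. if r = r0 then proj smul g T r0 x - bul_hom smul Y T r0 m m n (proj smul g T r0 x) vac else proj smul g T r x)"
    by (simp only: proj_sum bulx)
  also have "\<dots> \<in> ?O"
  proof (rule subspace_sum[OF subO])
    fix r assume r: "r \<in> {..<T}"
    show "(if r = r0 then proj smul g T r0 x - bul_hom smul Y T r0 m m n (proj smul g T r0 x) vac else proj smul g T r x) \<in> ?O"
    proof (cases "r = r0")
      case True
      then show ?thesis using O1_S[OF B] by simp
    next
      case False
      then show ?thesis using C[of r] r by simp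
    qed
  qed
  finally show ?thesis .
qed

end

context VActx begin

abbreviation BB where "BB m p n a b \<equiv> bul smul Y g T m p n a b"
abbreviation AA where "AA m p1 p2 p3 a b c \<equiv> BB m p1 p3 (BB p1 p2 p3 a b) c - BB m p2 p3 a (BB m p1 p2 b c)"

lemma span_lin_pre:
  assumes f: "Vector_Spaces.linear smul smul f" and W: "subspace W"
    and gen: "\<And>s. s \<in> S \<Longrightarrow> f s \<in> W" and x: "x \<in> span S"
  shows "f x \<in> W"
proof -
  have "subspace {x. f x \<in> W}"
    unfolding subspace_def using W linD[OF f] by (auto intro: subspace_add subspace_scale subspace_0)
  moreover have "S \<subseteq> {x. f x \<in> W}" using gen by blast
  ultimately have "span S \<subseteq> {x. f x \<in> W}" by (rule span_minimal[rotated])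
  then show ?thesis using x by blast
qed

lemma subspace_Ot: "subspace (Ot smul Y vac g T n m)"
  unfolding Ot_def set_plus_eq
  by (intro subspace_sums subspace_O1[unfolded set_plus_eq]) (simp_all add: O2_def O3_def)

lemma Ot_1: "x \<in> O1 smul Y vac g T n m \<Longrightarrow> x \<in> Ot smul Y vac g T n m"
proof -
  assume x: "x \<in> O1 smul Y vac g T n m"
  have "x + 0 + 0 \<in> Ot smul Y vac g T n m" unfolding Ot_def O2_def O3_def
    by (intro set_plus_intro x span_zero)
  then show ?thesis by simp
qed

lemma Ot_2: "x \<in> O2 smul Y g T n m \<Longrightarrow> x \<in> Ot smul Y vac g T n m"
proof -
  assume x: "x \<in> O2 smul Y g T n m"
  have "0 + x + 0 \<in> Ot smul Y vac g T n m" unfolding Ot_def O3_def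
    by (intro set_plus_intro x span_zero subspace_0[OF subspace_O1])
  then show ?thesis by simp
qed

lemma Ot_3: "x \<in> O3 smul Y vac g T n m \<Longrightarrow> x \<in> Ot smul Y vac g T n m"
proof -
  assume x: "x \<in> O3 smul Y vac g T n m"
  have "0 + 0 + x \<in> Ot smul Y vac g T n m" unfolding Ot_def O2_def
    by (intro set_plus_intro x span_zero subspace_0[OF subspace_O1])
  then show ?thesis by simp
qed

lemma Ot_cases:
  assumes "x \<in> Ot smul Y vac g T n m"
  obtains x1 x2 x3 where "x = x1 + x2 + x3" "x1 \<in> O1 smul Y vac g T n m"
    "x2 \<in> O2 smul Y g T n m" "x3 \<in> O3 smul Y vac g T n m"
  using assms unfolding Ot_def set_plus_def by blast

lemma O2gen: "p1 \<in> fracs T \<Longrightarrow> p2 \<in> fracs T \<Longrightarrow> p3 \<in> fracs T \<Longrightarrow>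
   BB m p3 n u (AA m p1 p2 p3 a b c) \<in> O2 smul Y g T n m"
  unfolding O2_def by (rule span_base) blast

lemma O2A: "m \<in> fracs T \<Longrightarrow> n \<in> fracs T \<Longrightarrow> p1 \<in> fracs T \<Longrightarrow> p2 \<in> fracs T \<Longrightarrow>
   AA m p1 p2 n a b c \<in> O2 smul Y g T n m"
  using O2gen[of p1 p2 n m n vac a b c] left_unit[of m n] by simp

lemma O3base: "ob \<in> O1 smul Y vac g T p2 p1 \<Longrightarrow> BB p1 p2 n w ob \<in> bulset smul Y g T p1 p2 n UNIV (O1 smul Y vac g T p2 p1)"
  unfolding bulset_def by (rule span_base) blast

lemma O3gen: "p1 \<in> fracs T \<Longrightarrow> p2 \<in> fracs T \<Longrightarrow> b1 \<in> bulset smul Y g T p1 p2 n UNIV (O1 smul Y vac g T p2 p1) \<Longrightarrow>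
  BB m p1 n b1 v \<in> O3 smul Y vac g T n m"
proof -
  assume p: "p1 \<in> fracs T" "p2 \<in> fracs T" and b1: "b1 \<in> bulset smul Y g T p1 p2 n UNIV (O1 smul Y vac g T p2 p1)"
  have "BB m p1 n b1 v \<in> bulset smul Y g T m p1 n (bulset smul Y g T p1 p2 n UNIV (O1 smul Y vac g T p2 p1)) UNIV"
    unfolding bulset_def[of _ _ _ _ m] by (rule span_base) (use b1 in blast)
  then show ?thesis unfolding O3_def by (intro span_base) (use p in blast)
qed

lemma pentagon:
  "BB m p1 t (AA p1 q1 q2 t a b c) v
   = AA m p1 q1 t (BB q1 q2 t a b) c v + AA m q1 q2 t a b (BB m p1 q1 c v)
     - AA m p1 q2 t a (BB p1 q1 q2 b c) v - BB m q2 t a (AA m p1 q1 q2 b c v)"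
  by (simp add: linD[OF lin_bul1] linD[OF lin_bul2])

end

context VActx begin

lemma claim1:
  assumes m: "m \<in> fracs T" and n: "n \<in> fracs T" and p: "p \<in> fracs T"
    and b: "b \<in> Ot smul Y vac g T p m"
  shows "BB m p n a b \<in> Ot smul Y vac g T n m"
proof -
  let ?W = "Ot smul Y vac g T n m"
  have subW: "subspace ?W" by (rule subspace_Ot)
  obtain b1 b2 b3 where bb: "b = b1 + b2 + b3" and b1: "b1 \<in> O1 smul Y vac g T p m"
    and b2: "b2 \<in> O2 smul Y g T p m" and b3: "b3 \<in> O3 smul Y vac g T p m"
    using Ot_cases[OF b] by blast
  have lin: "Vector_Spaces.linear smul smul (BB m p n a)" by (rule lin_bul2)
  have h1: "BB m p n a b1 \<in> ?W"
  proof -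
    let ?x = "BB m p n a b1"
    have r: "?x - BB m m n ?x vac \<in> ?W" by (rule Ot_1[OF RU[OF m n]])
    have o: "BB m m n ?x vac \<in> ?W" by (rule Ot_3[OF O3gen[OF m p O3base[OF b1]]])
    have "?x = (?x - BB m m n ?x vac) + BB m m n ?x vac" by simp
    also have "\<dots> \<in> ?W" by (rule subspace_add[OF subW r o])
    finally show ?thesis .
  qed
  have h2: "BB m p n a b2 \<in> ?W"
  proof (rule span_lin_pre[OF lin subW _ b2[unfolded O2_def]])
    fix s assume "s \<in> {BB m p3 p u (AA m p1 p2 p3 a b c) | u a b c p1 p2 p3. p1 \<in> fracs T \<and> p2 \<in> fracs T \<and> p3 \<in> fracs T}"
    then obtain u a' b' c' p1 p2 p3 where s: "s = BB m p3 p u (AA m p1 p2 p3 a' b' c')"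
      and ps: "p1 \<in> fracs T" "p2 \<in> fracs T" "p3 \<in> fracs T" by blast
    let ?X = "AA m p1 p2 p3 a' b' c'"
    have "BB m p n a s = BB m p3 n (BB p3 p n a u) ?X - AA m p3 p n a u ?X" unfolding s by simp
    also have "\<dots> \<in> ?W"
      by (rule subspace_diff[OF subW Ot_2[OF O2gen[OF ps]] Ot_2[OF O2A[OF m n ps(3) p]]])
    finally show "BB m p n a s \<in> ?W" .
  qed
  have h3: "BB m p n a b3 \<in> ?W"
  proof (rule span_lin_pre[OF lin subW _ b3[unfolded O3_def]])
    fix s assume "s \<in> \<Union>{bulset smul Y g T m p1 p (bulset smul Y g T p1 p2 p UNIV (O1 smul Y vac g T p2 p1)) UNIV
         | p1 p2. p1 \<in> fracs T \<and> p2 \<in> fracs T}"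
    then obtain p1 p2 where ps: "p1 \<in> fracs T" "p2 \<in> fracs T"
      and s: "s \<in> bulset smul Y g T m p1 p (bulset smul Y g T p1 p2 p UNIV (O1 smul Y vac g T p2 p1)) UNIV" by blast
    show "BB m p n a s \<in> ?W"
    proof (rule span_lin_pre[OF lin subW _ s[unfolded bulset_def[of _ _ _ _ m]]])
      fix s' assume "s' \<in> {BB m p1 p b1 v | b1 v. b1 \<in> bulset smul Y g T p1 p2 p UNIV (O1 smul Y vac g T p2 p1) \<and> v \<in> UNIV}"
      then obtain b1 v where s': "s' = BB m p1 p b1 v"
        and b1: "b1 \<in> bulset smul Y g T p1 p2 p UNIV (O1 smul Y vac g T p2 p1)" by blast
      have lin2: "Vector_Spaces.linear smul smul (BB m p n a o (\<lambda>b1. BB m p1 p b1 v))"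
        by (rule Vector_Spaces.linear_compose[OF lin_bul1 lin_bul2])
      have "(BB m p n a o (\<lambda>b1. BB m p1 p b1 v)) b1 \<in> ?W"
      proof (rule span_lin_pre[OF lin2 subW _ b1[unfolded bulset_def]])
        fix t assume "t \<in> {BB p1 p2 p w ob | w ob. w \<in> UNIV \<and> ob \<in> O1 smul Y vac g T p2 p1}"
        then obtain w ob where t: "t = BB p1 p2 p w ob" and ob: "ob \<in> O1 smul Y vac g T p2 p1" by blast
        have e: "(BB m p n a o (\<lambda>b1. BB m p1 p b1 v)) t
           = BB m p1 n (BB p1 p2 n (BB p2 p n a w) ob) v - BB m p1 n (AA p1 p2 p n a w ob) v
             - AA m p1 p n a (BB p1 p2 p w ob) v"
          unfolding t by (simp add: linD[OF lin_bul1])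
        have t1: "BB m p1 n (BB p1 p2 n (BB p2 p n a w) ob) v \<in> ?W"
          by (rule Ot_3[OF O3gen[OF ps O3base[OF ob]]])
        have t2: "BB m p1 n (AA p1 p2 p n a w ob) v \<in> ?W"
        proof -
          have "BB m p1 n (AA p1 p2 p n a w ob) v
            = AA m p1 p2 n (BB p2 p n a w) ob v + AA m p2 p n a w (BB m p1 p2 ob v)
              - AA m p1 p n a (BB p1 p2 p w ob) v - BB m p n a (AA m p1 p2 p w ob v)"
            by (rule pentagon)
          also have "\<dots> \<in> ?W"
            by (intro subspace_diff[OF subW] subspace_add[OF subW] Ot_2 O2A O2gen m n p ps)
          finally show ?thesis .
        qed
        have t3: "AA m p1 p n a (BB p1 p2 p w ob) v \<in> ?W" by (intro Ot_2 O2A m n p ps)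
        show "(BB m p n a o (\<lambda>b1. BB m p1 p b1 v)) t \<in> ?W"
          unfolding e by (intro subspace_diff[OF subW] t1 t2 t3)
      qed
      then show "BB m p n a s' \<in> ?W" unfolding s' by simp
    qed
  qed
  have "BB m p n a b = BB m p n a b1 + BB m p n a b2 + BB m p n a b3" unfolding bb by (simp add: linD[OF lin])
  also have "\<dots> \<in> ?W" by (intro subspace_add[OF subW] h1 h2 h3)
  finally show ?thesis .
qed

end

context VActx begin

lemma claim2:
  assumes m: "m \<in> fracs T" and n: "n \<in> fracs T" and p: "p \<in> fracs T"
    and b: "b \<in> Ot smul Y vac g T n p"
  shows "BB m p n b v \<in> Ot smul Y vac g T n m"
proof -
  let ?W = "Ot smul Y vac g T n m"
  have subW: "subspace ?W" by (rule subspace_Ot)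
  obtain b1 b2 b3 where bb: "b = b1 + b2 + b3" and b1: "b1 \<in> O1 smul Y vac g T n p"
    and b2: "b2 \<in> O2 smul Y g T n p" and b3: "b3 \<in> O3 smul Y vac g T n p"
    using Ot_cases[OF b] by blast
  have lin: "Vector_Spaces.linear smul smul (\<lambda>b. BB m p n b v)" by (rule lin_bul1)
  have h1: "BB m p n b1 v \<in> ?W"
  proof -
    have "BB m p n b1 v = BB m p n (BB p n n vac b1) v" using left_unit[OF p n] by simp
    also have "\<dots> \<in> ?W" by (rule Ot_3[OF O3gen[OF p n O3base[OF b1]]])
    finally show ?thesis .
  qed
  have h2: "BB m p n b2 v \<in> ?W"
  proof (rule span_lin_pre[OF lin subW _ b2[unfolded O2_def]])
    fix s assume "s \<in> {BB p p3 n u (AA p p1 p2 p3 a b c) | u a b c p1 p2 p3. p1 \<in> fracs T \<and> p2 \<in> fracs T \<and> p3 \<in> fracs T}"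
    then obtain u a b c p1 p2 p3 where s: "s = BB p p3 n u (AA p p1 p2 p3 a b c)"
      and ps: "p1 \<in> fracs T" "p2 \<in> fracs T" "p3 \<in> fracs T" by blast
    let ?X = "AA p p1 p2 p3 a b c"
    let ?E4 = "AA m p p1 p2 b c v"
    have e1: "BB m p n s v = AA m p p3 n u ?X v + BB m p3 n u (BB m p p3 ?X v)" unfolding s by simp
    have e2: "BB m p p3 ?X v = AA m p p1 p3 (BB p1 p2 p3 a b) c v + AA m p1 p2 p3 a b (BB m p p1 c v)
              - AA m p p2 p3 a (BB p p1 p2 b c) v - BB m p2 p3 a ?E4"
      by (rule pentagon)
    have e3: "BB m p3 n u (BB m p2 p3 a ?E4) = BB m p2 n (BB p2 p3 n u a) ?E4 - AA m p2 p3 n u a ?E4"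
      by simp
    have "BB m p n s v = AA m p p3 n u ?X v
        + (BB m p3 n u (AA m p p1 p3 (BB p1 p2 p3 a b) c v) + BB m p3 n u (AA m p1 p2 p3 a b (BB m p p1 c v))
           - BB m p3 n u (AA m p p2 p3 a (BB p p1 p2 b c) v)
           - (BB m p2 n (BB p2 p3 n u a) ?E4 - AA m p2 p3 n u a ?E4))"
      unfolding e1 e2 e3[symmetric] by (simp add: linD[OF lin_bul2])
    also have "\<dots> \<in> ?W"
      by (intro subspace_diff[OF subW] subspace_add[OF subW] Ot_2 O2A O2gen m n p ps)
    finally show "BB m p n s v \<in> ?W" .
  qed
  have h3: "BB m p n b3 v \<in> ?W"
  proof (rule span_lin_pre[OF lin subW _ b3[unfolded O3_def]])
    fix s assume "s \<in> \<Union>{bulset smul Y g T p p1 n (bulset smul Y g T p1 p2 n UNIV (O1 smul Y vac g T p2 p1)) UNIV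
         | p1 p2. p1 \<in> fracs T \<and> p2 \<in> fracs T}"
    then obtain p1 p2 where ps: "p1 \<in> fracs T" "p2 \<in> fracs T"
      and s: "s \<in> bulset smul Y g T p p1 n (bulset smul Y g T p1 p2 n UNIV (O1 smul Y vac g T p2 p1)) UNIV" by blast
    show "BB m p n s v \<in> ?W"
    proof (rule span_lin_pre[OF lin subW _ s[unfolded bulset_def[of _ _ _ _ p]]])
      fix s' assume "s' \<in> {BB p p1 n b1 v' | b1 v'. b1 \<in> bulset smul Y g T p1 p2 n UNIV (O1 smul Y vac g T p2 p1) \<and> v' \<in> UNIV}"
      then obtain b1 v' where s': "s' = BB p p1 n b1 v'"
        and b1: "b1 \<in> bulset smul Y g T p1 p2 n UNIV (O1 smul Y vac g T p2 p1)" by blast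
      have "BB m p n s' v = AA m p p1 n b1 v' v + BB m p1 n b1 (BB m p p1 v' v)" unfolding s' by simp
      also have "\<dots> \<in> ?W"
        by (rule subspace_add[OF subW Ot_2[OF O2A[OF m n p ps(1)]] Ot_3[OF O3gen[OF ps b1]]])
      finally show "BB m p n s' v \<in> ?W" .
    qed
  qed
  have "BB m p n b v = BB m p n b1 v + BB m p n b2 v + BB m p n b3 v" unfolding bb by (simp add: linD[OF lin])
  also have "\<dots> \<in> ?W" by (intro subspace_add[OF subW] h1 h2 h3)
  finally show ?thesis .
qed

lemma main1:
  assumes "m \<in> fracs T" "n \<in> fracs T" "p \<in> fracs T"
  shows "bulset smul Y g T m p n UNIV (Ot smul Y vac g T p m) \<subseteq> Ot smul Y vac g T n m"
  unfolding bulset_def by (rule span_minimal) (use claim1[OF assms] subspace_Ot in auto)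

lemma main2:
  assumes "m \<in> fracs T" "n \<in> fracs T" "p \<in> fracs T"
  shows "bulset smul Y g T m p n (Ot smul Y vac g T n p) UNIV \<subseteq> Ot smul Y vac g T n m"
  unfolding bulset_def by (rule span_minimal) (use claim2[OF assms] subspace_Ot in auto)

end

theorem lemma3p7:
  fixes smul :: "complex \<Rightarrow> 'v::ab_group_add \<Rightarrow> 'v"
    and Y :: "'v \<Rightarrow> int \<Rightarrow> 'v \<Rightarrow> 'v" and vac :: 'v
    and g :: "'v \<Rightarrow> 'v" and T :: nat and m n p :: rat
  assumes VA: "vertex_algebra smul Y vac"
    and aut: "va_automorphism smul Y vac g"
    and T: "T > 0" and gT: "g ^^ T = id"
    and m: "m \<in> fracs T" and n: "n \<in> fracs T" and p: "p \<in> fracs T"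
  shows "bulset smul Y g T m p n UNIV (Ot smul Y vac g T p m) \<subseteq> Ot smul Y vac g T n m
       \<and> bulset smul Y g T m p n (Ot smul Y vac g T n p) UNIV \<subseteq> Ot smul Y vac g T n m
       \<and> bulset smul Y g T m n n UNIV (Ot smul Y vac g T n m) \<subseteq> Ot smul Y vac g T n m
       \<and> bulset smul Y g T m m n (Ot smul Y vac g T n m) UNIV \<subseteq> Ot smul Y vac g T n m"
proof -
  interpret VActx smul Y vac g T using VA aut T gT by unfold_locales
  show ?thesis using main1[OF m n p] main2[OF m n p] main1[OF m n n] main2[OF m n m] by blast
qed


end
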